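(* Let $G$ be a connected graph with $\chi(G)=2$. If $P_\ell(G,2)\ge 1$, then $K_1\vee G$ is weakly enumeratively chromatic-choosable.
   Context: $K_1\vee G$ is the join: a new vertex adjacent to every vertex of $G$. For a list assignment $L$, $P(H,L)$ is the number of proper $L$-colorings of $H$; an $m$-assignment has all lists of size $m$; $P(H,m)$ is the chromatic polynomial, and the list color function $P_\ell(H,m)$ is the minimum of $P(H,L)$ over all $m$-assignments $L$. A graph $H$ is weakly enumeratively chromatic-choosable if $P_\ell(H,\chi(H))=P(H,\chi(H))$. *)

theory Defs
  imports Main "HOL-Library.FuncSet"
begin

definition graph :: "'a set \<Rightarrow> ('a \<Rightarrow> 'a \<Rightarrow> bool) \<Rightarrow> bool" where
  "graph V E \<longleftrightarrow> finite V \<and> (\<forall>u v. E u v \<longrightarrow> u \<in> V \<and> v \<in> V \<and> u \<noteq> v \<and> E v u)"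

definition connected_graph :: "'a set \<Rightarrow> ('a \<Rightarrow> 'a \<Rightarrow> bool) \<Rightarrow> bool" where
  "connected_graph V E \<longleftrightarrow> V \<noteq> {} \<and> (\<forall>u\<in>V. \<forall>v\<in>V. E\<^sup>*\<^sup>* u v)"

definition proper_L_colorings :: "'a set \<Rightarrow> ('a \<Rightarrow> 'a \<Rightarrow> bool) \<Rightarrow> ('a \<Rightarrow> nat set) \<Rightarrow> ('a \<Rightarrow> nat) set" where
  "proper_L_colorings V E L = {f \<in> PiE V L. \<forall>u v. E u v \<longrightarrow> f u \<noteq> f v}"

definition num_L_colorings :: "'a set \<Rightarrow> ('a \<Rightarrow> 'a \<Rightarrow> bool) \<Rightarrow> ('a \<Rightarrow> nat set) \<Rightarrow> nat" where
  "num_L_colorings V E L = card (proper_L_colorings V E L)"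

definition m_assignment :: "'a set \<Rightarrow> ('a \<Rightarrow> nat set) \<Rightarrow> nat \<Rightarrow> bool" where
  "m_assignment V L m \<longleftrightarrow> (\<forall>v\<in>V. finite (L v) \<and> card (L v) = m)"

definition chrom_poly :: "'a set \<Rightarrow> ('a \<Rightarrow> 'a \<Rightarrow> bool) \<Rightarrow> nat \<Rightarrow> nat" where
  "chrom_poly V E m = num_L_colorings V E (\<lambda>_. {0..<m})"

definition list_color_fun :: "'a set \<Rightarrow> ('a \<Rightarrow> 'a \<Rightarrow> bool) \<Rightarrow> nat \<Rightarrow> nat" where
  "list_color_fun V E m = Inf {num_L_colorings V E L | L. m_assignment V L m}"

definition chromatic_number :: "'a set \<Rightarrow> ('a \<Rightarrow> 'a \<Rightarrow> bool) \<Rightarrow> nat" where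
  "chromatic_number V E = (LEAST k. chrom_poly V E k > 0)"

text \<open>The join K_1 \<or> G: a new vertex None adjacent to every (Some v), v \<in> V.\<close>
definition join_K1_V :: "'a set \<Rightarrow> 'a option set" where
  "join_K1_V V = insert None (Some ` V)"

definition join_K1_E :: "'a set \<Rightarrow> ('a \<Rightarrow> 'a \<Rightarrow> bool) \<Rightarrow> 'a option \<Rightarrow> 'a option \<Rightarrow> bool" where
  "join_K1_E V E x y = (case (x, y) of
       (Some u, Some v) \<Rightarrow> E u v
     | (None, Some v) \<Rightarrow> v \<in> V
     | (Some u, None) \<Rightarrow> u \<in> V
     | (None, None) \<Rightarrow> False)"

definition weakly_ecc :: "'a set \<Rightarrow> ('a \<Rightarrow> 'a \<Rightarrow> bool) \<Rightarrow> bool" where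
  "weakly_ecc V E \<longleftrightarrow>
     list_color_fun V E (chromatic_number V E) = chrom_poly V E (chromatic_number V E)"

end

theory Submission
  imports Defs
begin

lemma proper_finite:
  "finite V \<Longrightarrow> (\<forall>v\<in>V. finite (M v)) \<Longrightarrow> finite (proper_L_colorings V E M)"
  unfolding proper_L_colorings_def by (rule finite_subset[of _ "PiE V M"]) (auto intro: finite_PiE)

lemma proper_mono:
  "(\<forall>v\<in>V. M v \<subseteq> M' v) \<Longrightarrow> proper_L_colorings V E M \<subseteq> proper_L_colorings V E M'"
  unfolding proper_L_colorings_def using PiE_mono[of V M M'] by blast

lemma two_le_card: "finite S \<Longrightarrow> a \<in> S \<Longrightarrow> b \<in> S \<Longrightarrow> a \<noteq> b \<Longrightarrow> 2 \<le> card S"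
  using card_mono[of S "{a,b}"] by auto

lemma three_le_card: "finite S \<Longrightarrow> a \<in> S \<Longrightarrow> b \<in> S \<Longrightarrow> c \<in> S \<Longrightarrow> a \<noteq> b \<Longrightarrow> a \<noteq> c
   \<Longrightarrow> b \<noteq> c \<Longrightarrow> 3 \<le> card S"
  using card_mono[of S "{a,b,c}"] by auto

lemma two_choose:
  assumes ch: "\<forall>M. m_assignment V M 2 \<longrightarrow> proper_L_colorings V E M \<noteq> {}"
    and M: "\<forall>v\<in>V. finite (M v) \<and> 2 \<le> card (M v)"
  shows "proper_L_colorings V E M \<noteq> {}"
proof -
  define M' where "M' = (\<lambda>v. SOME T. T \<subseteq> M v \<and> card T = 2)"
  have M': "M' v \<subseteq> M v \<and> card (M' v) = 2" if "v \<in> V" for v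
  proof -
    have "2 \<le> card (M v)" using M that by blast
    then obtain T where "T \<subseteq> M v" "card T = 2" using obtain_subset_with_card_n[of 2 "M v"] by blast
    then have "\<exists>T. T \<subseteq> M v \<and> card T = 2" by blast
    from someI_ex[OF this] show ?thesis unfolding M'_def .
  qed
  have "m_assignment V M' 2" unfolding m_assignment_def
  proof
    fix v assume "v \<in> V"
    then have "card (M' v) = 2" using M' by blast
    then show "finite (M' v) \<and> card (M' v) = 2" using card.infinite by fastforce
  qed
  then have "proper_L_colorings V E M' \<noteq> {}" using ch by blast
  moreover have "proper_L_colorings V E M' \<subseteq> proper_L_colorings V E M"
    using M' by (intro proper_mono) blast
  ultimately show ?thesis by blast
qed

lemma two_choose3:
  assumes fin: "finite V"
    and ch: "\<forall>M. m_assignment V M 2 \<longrightarrow> proper_L_colorings V E M \<noteq> {}"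
    and M: "\<forall>v\<in>V. finite (M v) \<and> 2 \<le> card (M v)"
    and u: "u \<in> V" "3 \<le> card (M u)"
  shows "2 \<le> card (proper_L_colorings V E M)"
proof -
  obtain g1 where g1: "g1 \<in> proper_L_colorings V E M" using two_choose[OF ch M] by blast
  define M2 where "M2 = M(u := M u - {g1 u})"
  have "\<forall>v\<in>V. finite (M2 v) \<and> 2 \<le> card (M2 v)"
    using M u unfolding M2_def by (auto simp: card_Diff_singleton_if)
  then obtain g2 where g2: "g2 \<in> proper_L_colorings V E M2" using two_choose[OF ch] by blast
  have sub: "proper_L_colorings V E M2 \<subseteq> proper_L_colorings V E M"
    by (rule proper_mono) (auto simp: M2_def)
  have "g2 u \<in> M2 u" using g2 u unfolding proper_L_colorings_def by auto
  then have "g2 u \<noteq> g1 u" by (simp add: M2_def)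
  then have "g1 \<noteq> g2" by auto
  then show ?thesis using two_le_card[OF proper_finite[OF fin] g1 subsetD[OF sub g2]] M by auto
qed

lemma common_color:
  assumes fin: "finite V" and gr: "graph V E"
    and phi: "\<phi> \<in> proper_L_colorings V E (\<lambda>_. {0..<2::nat})"
    and edge: "E p q"
    and M: "\<forall>v\<in>V. finite (M v) \<and> 2 \<le> card (M v)"
    and y: "\<forall>v\<in>V. y \<in> M v"
  shows "2 \<le> card (proper_L_colorings V E M)"
    and "(\<exists>u\<in>V. 3 \<le> card (M u)) \<Longrightarrow> 3 \<le> card (proper_L_colorings V E M)"
proof -
  have phiV: "\<phi> v < 2" if "v \<in> V" for v using phi that unfolding proper_L_colorings_def by auto
  have phiE: "\<phi> u \<noteq> \<phi> v" if "E u v" for u v using phi that unfolding proper_L_colorings_def by auto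
  have Ein: "u \<in> V \<and> v \<in> V \<and> u \<noteq> v" if "E u v" for u v using gr that unfolding graph_def by blast
  define oc where "oc = (\<lambda>v. SOME c. c \<in> M v \<and> c \<noteq> y)"
  have oc: "oc v \<in> M v \<and> oc v \<noteq> y" if "v \<in> V" for v
  proof -
    have "card (M v - {y}) \<ge> 1" using M y that by (auto simp: card_Diff_singleton_if)
    then have "\<exists>c. c \<in> M v \<and> c \<noteq> y" by (metis DiffD1 DiffD2 card.empty ex_in_conv insertI1 not_one_le_zero)
    from someI_ex[OF this] show ?thesis unfolding oc_def .
  qed
  define g where "g = (\<lambda>s v. if v \<in> V then (if \<phi> v = s then y else oc v) else undefined)"
  have gin: "g s \<in> proper_L_colorings V E M" if "s < 2" for s
    unfolding proper_L_colorings_def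
  proof (intro CollectI conjI allI impI)
    show "g s \<in> PiE V M" using oc y by (auto simp: g_def PiE_iff extensional_def)
    fix u v assume uv: "E u v"
    then have "u \<in> V" "v \<in> V" "\<phi> u \<noteq> \<phi> v" "\<phi> u < 2" "\<phi> v < 2" using Ein phiE phiV by auto
    then show "g s u \<noteq> g s v" using oc that by (auto simp: g_def)
  qed
  have fin2: "finite (proper_L_colorings V E M)" using proper_finite fin M by blast
  have pV: "p \<in> V" using Ein edge by blast
  have g01: "g 0 \<noteq> g 1"
  proof
    assume "g 0 = g 1"
    then have "g 0 p = g 1 p" by simp
    then show False using pV phiV[OF pV] oc[OF pV] by (auto simp: g_def split: if_splits)
  qed
  show "2 \<le> card (proper_L_colorings V E M)"
    using two_le_card[OF fin2 gin[of 0] gin[of 1] g01] by simp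
  assume "\<exists>u\<in>V. 3 \<le> card (M u)"
  then obtain u where u: "u \<in> V" "3 \<le> card (M u)" by blast
  define s where "s = 1 - \<phi> u"
  have s: "s < 2" "s \<noteq> \<phi> u" using phiV[OF u(1)] unfolding s_def by arith+
  have "card (M u - {y} - {g s u}) \<ge> 1" using u by (auto simp: card_Diff_singleton_if)
  then obtain c where c: "c \<in> M u" "c \<noteq> y" "c \<noteq> g s u"
    by (metis DiffD1 DiffD2 card.empty ex_in_conv insertI1 not_one_le_zero)
  define g3 where "g3 = (g s)(u := c)"
  have g3in: "g3 \<in> proper_L_colorings V E M"
    unfolding proper_L_colorings_def
  proof (intro CollectI conjI allI impI)
    show "g3 \<in> PiE V M" using oc y c u by (auto simp: g3_def g_def PiE_iff extensional_def)
    fix a b assume ab: "E a b"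
    then have ab': "a \<in> V" "b \<in> V" "\<phi> a \<noteq> \<phi> b" "\<phi> a < 2" "\<phi> b < 2" "a \<noteq> b" using Ein phiE phiV by auto
    have gs: "g s a \<noteq> g s b" using gin[OF s(1)] ab unfolding proper_L_colorings_def by auto
    show "g3 a \<noteq> g3 b"
    proof (cases "a = u \<or> b = u")
      case True
      then show ?thesis using ab' s c oc by (auto simp: g3_def g_def)
    next
      case False
      then show ?thesis using gs by (simp add: g3_def)
    qed
  qed
  have d1: "g3 \<noteq> g s" using c(3) by (metis fun_upd_same g3_def)
  have d2: "g3 \<noteq> g (\<phi> u)"
  proof
    assume "g3 = g (\<phi> u)"
    then have "g3 u = g (\<phi> u) u" by simp
    then show False using c u by (simp add: g3_def g_def)
  qed
  have d3: "g s \<noteq> g (\<phi> u)"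
  proof -
    have "{s, \<phi> u} = {0, 1}" using s phiV[OF u(1)] by auto
    then show ?thesis using g01 by (metis doubleton_eq_iff)
  qed
  show "3 \<le> card (proper_L_colorings V E M)"
    using three_le_card[OF fin2 g3in gin[OF s(1)] gin[OF phiV[OF u(1)]] d1 d2 d3] .
qed

definition ext :: "nat \<Rightarrow> ('a \<Rightarrow> nat) \<Rightarrow> 'a option \<Rightarrow> nat" where
  "ext x g = (\<lambda>z. case z of None \<Rightarrow> x | Some v \<Rightarrow> g v)"

lemma ext_inj: "inj (ext x)"
proof (rule injI)
  fix g1 g2 :: "'a \<Rightarrow> nat" assume "ext x g1 = ext x g2"
  then have "\<And>v. ext x g1 (Some v) = ext x g2 (Some v)" by simp
  then show "g1 = g2" by (auto simp: ext_def)
qed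

lemma ext_in:
  assumes gr: "graph V E" and x: "x \<in> L None"
    and g: "g \<in> proper_L_colorings V E (\<lambda>v. L (Some v) - {x})"
  shows "ext x g \<in> proper_L_colorings (join_K1_V V) (join_K1_E V E) L"
  unfolding proper_L_colorings_def
proof (intro CollectI conjI allI impI)
  have gP: "g \<in> PiE V (\<lambda>v. L (Some v) - {x})" and gE: "\<And>u v. E u v \<Longrightarrow> g u \<noteq> g v"
    using g unfolding proper_L_colorings_def by auto
  show "ext x g \<in> PiE (join_K1_V V) L"
    unfolding PiE_iff
  proof
    show "\<forall>z\<in>join_K1_V V. ext x g z \<in> L z" using gP x by (auto simp: join_K1_V_def ext_def PiE_iff)
    show "ext x g \<in> extensional (join_K1_V V)"
      using gP unfolding extensional_def
      by (auto simp: join_K1_V_def ext_def PiE_iff extensional_def split: option.splits)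
  qed
  fix o1 o2 assume e: "join_K1_E V E o1 o2"
  show "ext x g o1 \<noteq> ext x g o2"
  proof (cases o1; cases o2)
    fix u v assume "o1 = Some u" "o2 = Some v"
    then show ?thesis using e gE by (auto simp: join_K1_E_def ext_def)
  next
    fix v assume "o1 = None" "o2 = Some v"
    then show ?thesis using e gP by (auto simp: join_K1_E_def ext_def PiE_iff)
  next
    fix u assume "o1 = Some u" "o2 = None"
    then show ?thesis using e gP by (auto simp: join_K1_E_def ext_def PiE_iff)
  next
    assume "o1 = None" "o2 = None"
    then show ?thesis using e by (auto simp: join_K1_E_def)
  qed
qed

lemma join_finite:
  assumes "finite V" "\<forall>z\<in>join_K1_V V. finite (L z)"
  shows "finite (proper_L_colorings (join_K1_V V) (join_K1_E V E) L)"
  using proper_finite assms by (metis finite_imageI finite_insert join_K1_V_def)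

lemma join_count:
  assumes fin: "finite V" and gr: "graph V E"
    and Lfin: "\<forall>z\<in>join_K1_V V. finite (L z)"
    and Lw: "L None = {a, b, c}" and d: "a \<noteq> b" "a \<noteq> c" "b \<noteq> c"
  shows "card (proper_L_colorings V E (\<lambda>v. L (Some v) - {a}))
       + card (proper_L_colorings V E (\<lambda>v. L (Some v) - {b}))
       + card (proper_L_colorings V E (\<lambda>v. L (Some v) - {c}))
       \<le> card (proper_L_colorings (join_K1_V V) (join_K1_E V E) L)"
proof -
  define P where "P x = proper_L_colorings V E (\<lambda>v. L (Some v) - {x})" for x
  define C where "C x = ext x ` P x" for x
  have finP: "finite (P x)" for x unfolding P_def
    using Lfin fin by (intro proper_finite) (auto simp: join_K1_V_def)
  have cardC: "card (C x) = card (P x)" for x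
    unfolding C_def by (rule card_image) (meson ext_inj inj_on_subset subset_UNIV)
  have finC: "finite (C x)" for x unfolding C_def using finP by blast
  have CNone: "h None = x" if "h \<in> C x" for h x using that by (auto simp: C_def ext_def)
  have sub: "C a \<union> C b \<union> C c \<subseteq> proper_L_colorings (join_K1_V V) (join_K1_E V E) L"
    using ext_in[OF gr] Lw unfolding C_def P_def by blast
  have "card (C a \<union> C b \<union> C c) = card (C a) + card (C b) + card (C c)"
  proof -
    have "C a \<inter> C b = {}" using CNone d by blast
    moreover have "(C a \<union> C b) \<inter> C c = {}" using CNone d by blast
    ultimately show ?thesis using finC by (simp add: card_Un_disjoint)
  qed
  moreover have "card (C a \<union> C b \<union> C c) \<le> card (proper_L_colorings (join_K1_V V) (join_K1_E V E) L)"
    by (rule card_mono[OF join_finite[OF fin Lfin] sub])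
  ultimately show ?thesis using cardC unfolding P_def by simp
qed

lemma sum6:
  fixes N :: "nat \<Rightarrow> nat" and C :: "nat \<Rightarrow> bool"
  assumes Lw: "Lw = {a, b, c}" and d: "a \<noteq> b" "a \<noteq> c" "b \<noteq> c"
    and N1: "\<forall>x\<in>Lw. 1 \<le> N x"
    and N2: "\<forall>x\<in>Lw. \<not> C x \<longrightarrow> 2 \<le> N x"
    and N3: "\<forall>x\<in>Lw. \<forall>y\<in>Lw. y \<noteq> x \<longrightarrow> C y \<longrightarrow> 2 \<le> N x"
    and N4: "\<forall>x\<in>Lw. \<forall>y\<in>Lw. y \<noteq> x \<longrightarrow> C y \<longrightarrow> \<not> C x \<longrightarrow> 3 \<le> N x"
  shows "6 \<le> N a + N b + N c"
proof -
  have aL: "a \<in> Lw" and bL: "b \<in> Lw" and cL: "c \<in> Lw" using Lw by auto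
  note n1 = N1[rule_format] and n2 = N2[rule_format] and n3 = N3[rule_format] and n4 = N4[rule_format]
  have A: "1 \<le> N a" "1 \<le> N b" "1 \<le> N c" using n1 aL bL cL by auto
  show ?thesis
  proof (cases "C a")
    case Ca: True
    have "2 \<le> N b" "2 \<le> N c" using n3[OF bL aL] n3[OF cL aL] Ca d by auto
    show ?thesis
    proof (cases "C b")
      case True
      then have "2 \<le> N a" using n3[OF aL bL] d by auto
      then show ?thesis using \<open>2 \<le> N b\<close> \<open>2 \<le> N c\<close> by linarith
    next
      case nb: False
      show ?thesis
      proof (cases "C c")
        case True
        then have "2 \<le> N a" using n3[OF aL cL] d by auto
        then show ?thesis using \<open>2 \<le> N b\<close> \<open>2 \<le> N c\<close> by linarith
      next
        case False
        have "3 \<le> N b" "3 \<le> N c" using n4[OF bL aL] n4[OF cL aL] Ca nb False d by auto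
        then show ?thesis using A by linarith
      qed
    qed
  next
    case na: False
    have "2 \<le> N a" using n2[OF aL] na by auto
    show ?thesis
    proof (cases "C b")
      case Cb: True
      have "2 \<le> N c" using n3[OF cL bL] Cb d by auto
      show ?thesis
      proof (cases "C c")
        case True
        then have "2 \<le> N b" using n3[OF bL cL] d by auto
        then show ?thesis using \<open>2 \<le> N a\<close> \<open>2 \<le> N c\<close> by linarith
      next
        case False
        have "3 \<le> N a" "3 \<le> N c" using n4[OF aL bL] n4[OF cL bL] Cb na False d by auto
        then show ?thesis using A by linarith
      qed
    next
      case nb: False
      have "2 \<le> N b" using n2[OF bL] nb by auto
      show ?thesis
      proof (cases "C c")
        case True
        have "3 \<le> N a" "3 \<le> N b" using n4[OF aL cL] n4[OF bL cL] True na nb d by auto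
        then show ?thesis using A by linarith
      next
        case False
        have "2 \<le> N c" using n2[OF cL] False by auto
        then show ?thesis using \<open>2 \<le> N a\<close> \<open>2 \<le> N b\<close> by linarith
      qed
    qed
  qed
qed

lemma chromH_small:
  assumes gr: "graph V E" and e: "E p q" and k: "k < 3"
  shows "chrom_poly (join_K1_V V) (join_K1_E V E) k = 0"
proof -
  have "proper_L_colorings (join_K1_V V) (join_K1_E V E) (\<lambda>_. {0..<k}) = {}"
  proof (rule ccontr)
    assume "proper_L_colorings (join_K1_V V) (join_K1_E V E) (\<lambda>_. {0..<k}) \<noteq> {}"
    then obtain h where h: "h \<in> proper_L_colorings (join_K1_V V) (join_K1_E V E) (\<lambda>_. {0..<k})" by blast
    have pq: "p \<in> V" "q \<in> V" using gr e unfolding graph_def by auto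
    have j: "join_K1_E V E None (Some p)" "join_K1_E V E None (Some q)" "join_K1_E V E (Some p) (Some q)"
      using pq e by (auto simp: join_K1_E_def)
    have ne: "h None \<noteq> h (Some p)" "h None \<noteq> h (Some q)" "h (Some p) \<noteq> h (Some q)"
      using h j unfolding proper_L_colorings_def by auto
    have lt: "h None < k" "h (Some p) < k" "h (Some q) < k"
      using h pq unfolding proper_L_colorings_def by (auto simp: join_K1_V_def PiE_iff)
    show False using ne lt k by linarith
  qed
  then show ?thesis by (simp add: chrom_poly_def num_L_colorings_def)
qed

lemma chromH_pos:
  assumes fin: "finite V" and gr: "graph V E"
    and phi: "\<phi> \<in> proper_L_colorings V E (\<lambda>_. {0..<2::nat})"
  shows "0 < chrom_poly (join_K1_V V) (join_K1_E V E) 3"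
proof -
  have "proper_L_colorings V E (\<lambda>_. {0..<2::nat}) \<subseteq> proper_L_colorings V E (\<lambda>v. (\<lambda>_. {0..<3::nat}) (Some v) - {2})"
    by (rule proper_mono) auto
  then have "ext 2 \<phi> \<in> proper_L_colorings (join_K1_V V) (join_K1_E V E) (\<lambda>_. {0..<3})"
    using ext_in[OF gr, of 2 "\<lambda>_. {0..<3}"] phi by auto
  moreover have "finite (proper_L_colorings (join_K1_V V) (join_K1_E V E) (\<lambda>_. {0..<3::nat}))"
    using join_finite[OF fin] by auto
  ultimately show ?thesis unfolding chrom_poly_def num_L_colorings_def
    by (metis card_gt_0_iff empty_iff)
qed

lemma chromH_le6:
  assumes gr: "graph V E" and con: "connected_graph V E"
  shows "chrom_poly (join_K1_V V) (join_K1_E V E) 3 \<le> 6"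
proof -
  obtain v0 where v0: "v0 \<in> V" using con unfolding connected_graph_def by blast
  have fin: "finite V" using gr unfolding graph_def by blast
  define P where "P = proper_L_colorings (join_K1_V V) (join_K1_E V E) (\<lambda>_. {0..<3::nat})"
  define B where "B = {(0::nat,1::nat),(0,2),(1,0),(1,2),(2,0),(2,1)}"
  define F where "F = (\<lambda>h::'a option \<Rightarrow> nat. (h None, h (Some v0)))"
  have props: "h None < 3 \<and> (\<forall>v\<in>V. h (Some v) < 3 \<and> h None \<noteq> h (Some v))
      \<and> (\<forall>u v. E u v \<longrightarrow> h (Some u) \<noteq> h (Some v))
      \<and> (\<forall>z. z \<notin> join_K1_V V \<longrightarrow> h z = undefined)" if "h \<in> P" for h
  proof -
    have hP: "h \<in> PiE (join_K1_V V) (\<lambda>_. {0..<3})" and hE: "\<And>a b. join_K1_E V E a b \<Longrightarrow> h a \<noteq> h b"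
      using that unfolding P_def proper_L_colorings_def by auto
    have "\<forall>v\<in>V. h None \<noteq> h (Some v)" using hE by (auto simp: join_K1_E_def)
    moreover have "\<forall>u v. E u v \<longrightarrow> h (Some u) \<noteq> h (Some v)" using hE by (auto simp: join_K1_E_def)
    ultimately show ?thesis using hP by (auto simp: PiE_iff join_K1_V_def extensional_def)
  qed
  have inj: "inj_on F P"
  proof (rule inj_onI)
    fix h1 h2 assume h1: "h1 \<in> P" and h2: "h2 \<in> P" and eq: "F h1 = F h2"
    note p1 = props[OF h1] and p2 = props[OF h2]
    have N: "h1 None = h2 None" and V0: "h1 (Some v0) = h2 (Some v0)" using eq by (auto simp: F_def)
    have step: "h1 (Some v) = h2 (Some v)" if "E\<^sup>*\<^sup>* v0 v" for v
      using that
    proof (induction rule: rtranclp_induct)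
      case base then show ?case using V0 .
    next
      case (step u v)
      have uv: "u \<in> V" "v \<in> V" using gr step.hyps(2) unfolding graph_def by auto
      have a: "h1 (Some u) \<noteq> h1 (Some v)" "h2 (Some u) \<noteq> h2 (Some v)" using p1 p2 step.hyps(2) by auto
      have b: "h1 None \<noteq> h1 (Some v)" "h2 None \<noteq> h2 (Some v)" "h1 None \<noteq> h1 (Some u)"
        "h1 (Some v) < 3" "h2 (Some v) < 3" "h1 (Some u) < 3" "h1 None < 3"
        using p1 p2 uv by auto
      show ?case using a b N step.IH by linarith
    qed
    show "h1 = h2"
    proof
      fix z show "h1 z = h2 z"
      proof (cases z)
        case None then show ?thesis using N by simp
      next
        case (Some v)
        show ?thesis
        proof (cases "v \<in> V")
          case True
          then have "E\<^sup>*\<^sup>* v0 v" using con v0 unfolding connected_graph_def by blast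
          then show ?thesis using step Some by simp
        next
          case False
          then have "z \<notin> join_K1_V V" using Some by (auto simp: join_K1_V_def)
          then show ?thesis using p1 p2 by simp
        qed
      qed
    qed
  qed
  have img: "F ` P \<subseteq> B"
  proof
    fix w assume "w \<in> F ` P"
    then obtain h where h: "h \<in> P" "w = F h" by blast
    have "h None < 3" "h (Some v0) < 3" "h None \<noteq> h (Some v0)" using props[OF h(1)] v0 by auto
    then show "w \<in> B" unfolding h(2) F_def B_def
      by (auto simp: less_Suc_eq numeral_3_eq_3)
  qed
  have "card P \<le> card B" by (rule card_inj_on_le[OF inj img]) (simp add: B_def)
  also have "card B = 6" by (simp add: B_def)
  finally show ?thesis unfolding chrom_poly_def num_L_colorings_def P_def .
qed

theorem proposition27:
  fixes V :: "'a set" and E :: "'a \<Rightarrow> 'a \<Rightarrow> bool"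
  assumes "graph V E"
    and "connected_graph V E"
    and "chromatic_number V E = 2"
    and "list_color_fun V E 2 \<ge> 1"
  shows "weakly_ecc (join_K1_V V) (join_K1_E V E)"
proof -
  note gr = assms(1) and con = assms(2)
  have fin: "finite V" using gr unfolding graph_def by blast
  have bdd: "bdd_below (X::nat set)" for X by (rule bdd_belowI[of _ 0]) simp
  have ch: "\<forall>M. m_assignment V M 2 \<longrightarrow> proper_L_colorings V E M \<noteq> {}"
  proof (intro allI impI)
    fix M assume "m_assignment V M 2"
    then have "list_color_fun V E 2 \<le> num_L_colorings V E M"
      unfolding list_color_fun_def by (intro cInf_lower[OF _ bdd]) blast
    then have "1 \<le> card (proper_L_colorings V E M)" using assms(4) by (simp add: num_L_colorings_def)
    then show "proper_L_colorings V E M \<noteq> {}" by auto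
  qed
  have "m_assignment V (\<lambda>_. {0..<2}) 2" by (simp add: m_assignment_def)
  then obtain \<phi> where phi: "\<phi> \<in> proper_L_colorings V E (\<lambda>_. {0..<2::nat})" using ch by blast
  obtain p q where e: "E p q"
  proof (rule ccontr)
    assume "\<not> thesis"
    then have noe: "\<And>p q. \<not> E p q" using that by blast
    define f where "f = (\<lambda>v. if v \<in> V then (0::nat) else undefined)"
    have "f \<in> proper_L_colorings V E (\<lambda>_. {0..<1})"
      unfolding proper_L_colorings_def using noe by (auto simp: f_def PiE_iff extensional_def)
    moreover have "finite (proper_L_colorings V E (\<lambda>_. {0..<1::nat}))" using proper_finite[OF fin, of "\<lambda>_. {0..<1::nat}"] by simp
    ultimately have "0 < card (proper_L_colorings V E (\<lambda>_. {0..<1::nat}))"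
      using card_gt_0_iff by blast
    then have "0 < chrom_poly V E 1" unfolding chrom_poly_def num_L_colorings_def by simp
    then have "chromatic_number V E \<le> 1" unfolding chromatic_number_def by (rule Least_le[where P="\<lambda>k. 0 < chrom_poly V E k"])
    then show False using assms(3) by simp
  qed
  define VH where "VH = join_K1_V V"
  define EH where "EH = join_K1_E V E"
  have chi: "chromatic_number VH EH = 3"
    unfolding chromatic_number_def VH_def EH_def
  proof (rule Least_equality)
    show "0 < chrom_poly (join_K1_V V) (join_K1_E V E) 3" by (rule chromH_pos[OF fin gr phi])
    fix k assume "0 < chrom_poly (join_K1_V V) (join_K1_E V E) k"
    then show "3 \<le> k" using chromH_small[OF gr e, of k] by (cases "k < 3") auto
  qed
  have le6: "chrom_poly VH EH 3 \<le> 6" unfolding VH_def EH_def by (rule chromH_le6[OF gr con])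
  define S where "S = {num_L_colorings VH EH L | L. m_assignment VH L 3}"
  have "m_assignment VH (\<lambda>_. {0..<3}) 3" by (simp add: m_assignment_def)
  then have cS: "chrom_poly VH EH 3 \<in> S" unfolding S_def chrom_poly_def by blast
  have ge6: "6 \<le> s" if sS: "s \<in> S" for s
  proof -
    obtain L where L: "m_assignment VH L 3" and s: "s = num_L_colorings VH EH L"
      using sS unfolding S_def by blast
    have Lz: "finite (L z) \<and> card (L z) = 3" if "z \<in> VH" for z using L that unfolding m_assignment_def by blast
    have "None \<in> VH" by (simp add: VH_def join_K1_V_def)
    then have "card (L None) = 3" using Lz by blast
    then obtain a b c where abc: "L None = {a, b, c}" "a \<noteq> b" "b \<noteq> c" "a \<noteq> c"
      by (auto simp: card_3_iff)
    have LS: "finite (L (Some v)) \<and> card (L (Some v)) = 3" if "v \<in> V" for v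
      using Lz that by (auto simp: VH_def join_K1_V_def)
    define N where "N x = card (proper_L_colorings V E (\<lambda>v. L (Some v) - {x}))" for x
    define C where "C y = (\<forall>v\<in>V. y \<in> L (Some v))" for y
    have Mx: "\<forall>v\<in>V. finite (L (Some v) - {x}) \<and> 2 \<le> card (L (Some v) - {x})" for x
      using LS by (auto simp: card_Diff_singleton_if)
    have finN: "finite (proper_L_colorings V E (\<lambda>v. L (Some v) - {x}))" for x
      by (rule proper_finite[OF fin]) (use Mx in blast)
    have N1: "\<forall>x\<in>L None. 1 \<le> N x"
    proof
      fix x
      have "proper_L_colorings V E (\<lambda>v. L (Some v) - {x}) \<noteq> {}" by (rule two_choose[OF ch Mx])
      then have "0 < N x" unfolding N_def using finN[of x] card_gt_0_iff by blast
      then show "1 \<le> N x" by simp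
    qed
    have N2: "\<forall>x\<in>L None. \<not> C x \<longrightarrow> 2 \<le> N x"
    proof (intro ballI impI)
      fix x assume "\<not> C x"
      then obtain u where u: "u \<in> V" "x \<notin> L (Some u)" unfolding C_def by blast
      then have "3 \<le> card (L (Some u) - {x})" using LS by simp
      then show "2 \<le> N x" unfolding N_def by (rule two_choose3[OF fin ch Mx u(1)])
    qed
    have N34: "2 \<le> N x \<and> (\<not> C x \<longrightarrow> 3 \<le> N x)" if "y \<noteq> x" "C y" for x y
    proof -
      have y: "\<forall>v\<in>V. y \<in> L (Some v) - {x}" using that unfolding C_def by blast
      note cc = common_color[OF fin gr phi e Mx y]
      have "2 \<le> N x" using cc(1) unfolding N_def .
      moreover have "3 \<le> N x" if "\<not> C x"
      proof -
        obtain u where u: "u \<in> V" "x \<notin> L (Some u)" using \<open>\<not> C x\<close> unfolding C_def by blast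
        then have "3 \<le> card (L (Some u) - {x})" using LS by simp
        then show ?thesis using cc(2) u(1) unfolding N_def by blast
      qed
      ultimately show ?thesis by blast
    qed
    have N3: "\<forall>x\<in>L None. \<forall>y\<in>L None. y \<noteq> x \<longrightarrow> C y \<longrightarrow> 2 \<le> N x"
      using N34 by blast
    have N4: "\<forall>x\<in>L None. \<forall>y\<in>L None. y \<noteq> x \<longrightarrow> C y \<longrightarrow> \<not> C x \<longrightarrow> 3 \<le> N x"
      using N34 by blast
    have six: "6 \<le> N a + N b + N c"
      by (rule sum6[OF abc(1) abc(2) abc(4) abc(3) N1 N2 N3 N4])
    have Lfin: "\<forall>z\<in>join_K1_V V. finite (L z)" using Lz VH_def by blast
    have cnt: "N a + N b + N c \<le> card (proper_L_colorings VH EH L)"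
      unfolding N_def VH_def EH_def by (rule join_count[OF fin gr Lfin abc(1) abc(2) abc(4) abc(3)])
    show ?thesis using six cnt by (simp add: s num_L_colorings_def)
  qed
  have "list_color_fun VH EH 3 \<le> chrom_poly VH EH 3"
    unfolding list_color_fun_def S_def[symmetric] by (rule cInf_lower[OF cS bdd])
  moreover have "6 \<le> list_color_fun VH EH 3"
    unfolding list_color_fun_def S_def[symmetric] using cS ge6 by (intro cInf_greatest) auto
  ultimately have "list_color_fun VH EH 3 = chrom_poly VH EH 3" using le6 by linarith
  then show ?thesis unfolding weakly_ecc_def chi[unfolded VH_def EH_def] VH_def EH_def .
qed

end
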